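(* Let $\mathfrak L=\mathbb V\oplus\mathbb W$ be a color gLt-algebra admitting a quasi-multiplicative basis $\mathfrak B=\{e_i\}_{i\in I}$ of $\mathbb W\neq 0$. For any $i\in I$, the linear subspace $\mathfrak J_{[i]}=\mathbb V_{[i]}\oplus\mathbb W_{[i]}$ is a color gLt-ideal of $\mathfrak L$ admitting a quasi-multiplicative basis inherited by the one of $\mathfrak L$.
   Context: Let $\mathbb F$ be a field, $\mathbb G$ an abelian group, $n\ge 2$, and $\epsilon:\mathbb G\times\mathbb G\to\mathbb F\setminus\{0\}$ a bicharacter ($\epsilon(k,g+h)=\epsilon(k,g)\epsilon(k,h)$, $\epsilon(g+h,k)=\epsilon(g,k)\epsilon(h,k)$, $\epsilon(g,h)\epsilon(h,g)=1$). A graded $n$-ary algebra is a $\mathbb G$-graded vector space $\mathfrak L=\bigoplus_{g\in\mathbb G}\mathfrak L_g$ with an $n$-linear map $\langle\cdot,\dots,\cdot\rangle:\mathfrak L^n\to\mathfrak L$ such that $\langle\mathfrak L_{g_1},\dots,\mathfrak L_{g_n}\rangle\subset\mathfrak L_{g_1+\dots+g_n}$. For $\sigma\in\mathbb S_n$ write $\langle x_1,\dots,x_n\rangle_\sigma:=\langle x_{\sigma(1)},\dots,x_{\sigma(n)}\rangle$; for subsets $A_1,\dots,A_n$, $\langle A_1,\dots,A_n\rangle_\sigma$ denotes the linear span of all $\langle x_1,\dots,x_n\rangle_\sigma$ with $x_r\in A_r$. A color gLt-algebra is a graded $n$-ary algebra satisfying, for each $k=1,\dots,n$ and fixed scalars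 $\alpha^{\sigma_1,\sigma_2}_{i,j,k}\in\mathbb F$, the color version (each term on the right multiplied by the product of values of $\epsilon$ on the degrees of the homogeneous arguments transposed in passing from the left-hand order to the order of that term) of the identity $\langle y_1,\dots,y_{k-1},\langle x_1,\dots,x_n\rangle,y_k,\dots,y_{n-1}\rangle=\sum_{1\le i,j\le n,\,\sigma_1\in\mathbb S_n,\,\sigma_2\in\mathbb S_{n-1}}\alpha^{\sigma_1,\sigma_2}_{i,j,k}\langle x_{\sigma_1(1)},\dots,x_{\sigma_1(i-1)},\langle y_{\sigma_2(1)},\dots,y_{\sigma_2(j-1)},x_{\sigma_1(i)},y_{\sigma_2(j)},\dots,y_{\sigma_2(n-1)}\rangle,x_{\sigma_1(i+1)},\dots,x_{\sigma_1(n)}\rangle$. A $\mathbb G$-graded subspace $\mathcal I\subset\mathfrak L$ is a color gLt-ideal if $\langle\mathcal I,\mathfrak L,\dots,\mathfrak L\rangle_\sigma\subset\mathcal I$ for every $\sigma\in\mathbb S_n$. $\mathfrak L$ admits a quasi-multiplicative basis if $\mathfrak L=\mathbb V\oplus\mathbb W$ with $\mathbb V$, $\mathbb W\ne0$ graded subspaces and $\mathfrak B=\{e_i\}_{i\in I}$ a basis of homogeneous elements of $\mathbb W$ such that: (1) for $i_1,\dots,i_n\in I$, either $\langle e_{i_1},\dots,e_{i_n}\rangle\in\mathbb Fe_j$ for some $j\in I$ or $\langle e_{i_1},\dots,e_{i_n}\rangle\in\mathbb V$; (2) for $0<k<n$, $i_1,\dots,i_k\in I$ and $\sigma\in\mathbb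 S_n$, $\langle e_{i_1},\dots,e_{i_k},\mathbb V,\dots,\mathbb V\rangle_\sigma\subset\mathbb Fe_{j_\sigma}$ for some $j_\sigma\in I$; (3) either $\langle\mathbb V,\dots,\mathbb V\rangle\subset\mathbb Fe_j$ for some $j\in I$ or $\langle\mathbb V,\dots,\mathbb V\rangle\subset\mathbb V$. A graded subalgebra (or ideal) $\mathfrak S$ has a quasi-multiplicative basis inherited by the one of $\mathfrak L$ if $\mathfrak S=\mathbb V_{\mathfrak S}\oplus\mathbb W_{\mathfrak S}$ with $\mathbb V_{\mathfrak S}$ a graded subspace of $\mathbb V$ and $0\ne\mathbb W_{\mathfrak S}$ a graded subspace of $\mathbb W$ admitting a subset $\mathfrak B'\subset\mathfrak B$ as a basis. Index maps: let $v$ be a symbol not in $I$, $\mathfrak I:=I\,\dot\cup\,\{v\}$; for each $j\in\mathfrak I$ take a new symbol $\overline j$, $\overline I:=\{\overline i:i\in I\}$, $\overline{\mathfrak I}:=\overline I\,\dot\cup\,\{\overline v\}$; set $\overline{(\overline j)}:=j$, $\overline J:=\{\overline j:j\in J\}$ for a set $J$ of symbols ($\overline\emptyset=\emptyset$). Put $u_j:=e_j$ for $j\in I$ and $u_v:=\mathbb V$. For $\sigma\in\mathbb S_n$ and $(j_1,\dots,j_n)\in\mathfrak I^n$ let $a_\sigma(j_1,\dots,j_n)=\{r\}$ if $r\in I$ and $0\ne\langle u_{j_1},\dots,u_{j_n}\rangle_\sigma\subset\mathbb Fe_r$, $=\{v\}$ if $0\ne\langle u_{j_1},\dots,u_{j_n}\rangle_\sigma\subset\mathbb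 V$, and $=\emptyset$ otherwise. For $j,j_2,\dots,j_n\in\mathfrak I$ let $b_\sigma(j,\overline j_2,\dots,\overline j_n):=\{x\in\mathfrak I: a_\sigma(x,j_2,\dots,j_n)=\{j\}\}$. Define $\mu$ on $(\mathfrak I\,\dot\cup\,\overline{\mathfrak I})\times(\mathfrak I^{n-1}\,\dot\cup\,\overline{\mathfrak I}^{n-1})$ with values subsets of $\mathfrak I$ by: $\mu(j,j_1,\dots,j_{n-1})=\bigcup_{\sigma\in\mathbb S_n}a_\sigma(j,j_1,\dots,j_{n-1})$ for $j,j_1,\dots,j_{n-1}\in\mathfrak I$; $\mu(j,\overline j_1,\dots,\overline j_{n-1})=\bigcup_{\sigma\in\mathbb S_n}b_\sigma(j,\overline j_1,\dots,\overline j_{n-1})$ for $j,j_1,\dots,j_{n-1}\in\mathfrak I$; $\mu(\overline j,j_1,\dots,j_{n-1})=\bigcup_{1\le k\le n-1,\ \sigma\in\mathbb S_n}b_\sigma(j_k,\overline j,\overline j_1,\dots,\overline j_{k-1},\overline j_{k+1},\dots,\overline j_{n-1})$ for $j,j_1,\dots,j_{n-1}\in\mathfrak I$; and $\mu(\overline j,\overline j_1,\dots,\overline j_{n-1})=\emptyset$. Define $\phi$ on pairs $(J,X)$ with $J\subset I\,\dot\cup\,\overline I$ and $X\in\mathfrak I^{n-1}\,\dot\cup\,\overline{\mathfrak I}^{n-1}$ by $\phi(\emptyset,X)=\emptyset$ and, for $J\ne\emptyset$, $\phi(J,X):=K\cup\overline K$ where $K:=\big(\bigcup_{j\in J}\mu(j,X)\big)\setminus\{v\}$.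 Connections: for distinct $i,j\in I$, $i$ is connected to $j$ if there exist $t\ge1$, $X_1,\dots,X_t\in\mathfrak I^{n-1}\,\dot\cup\,\overline{\mathfrak I}^{n-1}$ and $\widetilde i\in\{i,\overline i\}$ such that $\phi(\{\widetilde i\},X_1)\ne\emptyset$, …, $\phi(\cdots\phi(\{\widetilde i\},X_1)\cdots,X_{t-1})\ne\emptyset$, and $j\in\phi(\cdots\phi(\phi(\{\widetilde i\},X_1),X_2)\cdots,X_t)$; every $i$ is connected to itself. Being connected is an equivalence relation $\sim$ on $I$; $[i]$ denotes the class of $i$. Define $\mathbb V_{[i]}:=\big(\sum_{i_1,\dots,i_n\in[i]}\mathbb F\langle e_{i_1},\dots,e_{i_n}\rangle\big)\cap\mathbb V$, $\mathbb W_{[i]}:=\bigoplus_{j\in[i]}\mathbb Fe_j$, and $\mathfrak J_{[i]}:=\mathbb V_{[i]}\oplus\mathbb W_{[i]}$. *)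

theory Defs
  imports Complex_Main "HOL-Combinatorics.Permutations"
begin

definition perms :: "nat \<Rightarrow> (nat \<Rightarrow> nat) set" where
  "perms m = {\<sigma>. \<sigma> permutes {0..<m}}"

definition line :: "('f::field \<Rightarrow> 'v::ab_group_add \<Rightarrow> 'v) \<Rightarrow> 'v \<Rightarrow> 'v set" where
  "line scale x = range (\<lambda>c. scale c x)"

definition setsum :: "'v::ab_group_add set \<Rightarrow> 'v set \<Rightarrow> 'v set" where
  "setsum A B = {a + b | a b. a \<in> A \<and> b \<in> B}"

text \<open>Bracket of subsets: span of all products of the permuted arguments (the paper's
  \<open>\<langle>A_1,\<dots>,A_n\<rangle>_\<sigma>\<close>); the product is a map on lists of length n.\<close>
definition brk :: "('f::field \<Rightarrow> 'v::ab_group_add \<Rightarrow> 'v) \<Rightarrow> ('v list \<Rightarrow> 'v) \<Rightarrow> nat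
    \<Rightarrow> (nat \<Rightarrow> nat) \<Rightarrow> 'v set list \<Rightarrow> 'v set" where
  "brk scale mul n \<sigma> As = module.span scale
     {mul (map (\<lambda>r. xs ! \<sigma> r) [0..<n]) | xs. length xs = n \<and> (\<forall>r<n. xs ! r \<in> As ! r)}"

definition graded_space :: "('f::field \<Rightarrow> 'v::ab_group_add \<Rightarrow> 'v) \<Rightarrow> ('g \<Rightarrow> 'v set) \<Rightarrow> bool" where
  "graded_space scale Lg \<longleftrightarrow>
     (\<forall>g. module.subspace scale (Lg g)) \<and>
     module.span scale (\<Union>g. Lg g) = UNIV \<and>
     (\<forall>D f. finite D \<and> (\<forall>g\<in>D. f g \<in> Lg g) \<and> sum f D = 0 \<longrightarrow> (\<forall>g\<in>D. f g = 0))"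

definition graded_subspace :: "('f::field \<Rightarrow> 'v::ab_group_add \<Rightarrow> 'v) \<Rightarrow> ('g \<Rightarrow> 'v set) \<Rightarrow> 'v set \<Rightarrow> bool" where
  "graded_subspace scale Lg S \<longleftrightarrow>
     module.subspace scale S \<and> S \<subseteq> module.span scale (\<Union>g. S \<inter> Lg g)"

definition multilinear :: "('f::field \<Rightarrow> 'v::ab_group_add \<Rightarrow> 'v) \<Rightarrow> nat \<Rightarrow> ('v list \<Rightarrow> 'v) \<Rightarrow> bool" where
  "multilinear scale n mul \<longleftrightarrow>
     (\<forall>xs r. length xs = n \<and> r < n \<longrightarrow> Vector_Spaces.linear scale scale (\<lambda>x. mul (xs[r := x])))"

definition graded_nary_algebra :: "('f::field \<Rightarrow> 'v::ab_group_add \<Rightarrow> 'v) \<Rightarrow> ('g::ab_group_add \<Rightarrow> 'v set)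
    \<Rightarrow> nat \<Rightarrow> ('v list \<Rightarrow> 'v) \<Rightarrow> bool" where
  "graded_nary_algebra scale Lg n mul \<longleftrightarrow>
     graded_space scale Lg \<and> multilinear scale n mul \<and>
     (\<forall>xs gs. length xs = n \<and> length gs = n \<and> (\<forall>r<n. xs ! r \<in> Lg (gs ! r))
         \<longrightarrow> mul xs \<in> Lg (sum_list gs))"

definition bicharacter :: "('g::ab_group_add \<Rightarrow> 'g \<Rightarrow> 'f::field) \<Rightarrow> bool" where
  "bicharacter eps \<longleftrightarrow>
     (\<forall>g h. eps g h \<noteq> 0) \<and>
     (\<forall>k g h. eps k (g + h) = eps k g * eps k h) \<and>
     (\<forall>g h k. eps (g + h) k = eps g k * eps h k) \<and>
     (\<forall>g h. eps g h * eps h g = 1)"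

text \<open>ds: degrees of the 2n-1 arguments in the left-hand order; ord: the order of the
  arguments in a right-hand term, given as a list of left-hand positions.\<close>
definition color_factor :: "('g \<Rightarrow> 'g \<Rightarrow> 'f::field) \<Rightarrow> 'g list \<Rightarrow> nat list \<Rightarrow> 'f" where
  "color_factor eps ds ord =
     (\<Prod>(a, b) \<in> {(a, b). a < b \<and> b < length ds \<and>
                     (\<exists>p q. p < q \<and> q < length ord \<and> ord ! p = b \<and> ord ! q = a)}.
        eps (ds ! a) (ds ! b))"

text \<open>Positions (0-based) in the left-hand order y_1..y_{k-1}, x_1..x_n, y_k..y_{n-1}.\<close>
definition posx :: "nat \<Rightarrow> nat \<Rightarrow> nat" where "posx k s = k - 1 + s"
definition posy :: "nat \<Rightarrow> nat \<Rightarrow> nat \<Rightarrow> nat" where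
  "posy n k r = (if r < k - 1 then r else r + n)"

text \<open>i, j, k are 1-based as in the paper; permutations act on 0-based positions.\<close>
definition rhs_order :: "nat \<Rightarrow> nat \<Rightarrow> nat \<Rightarrow> nat \<Rightarrow> (nat \<Rightarrow> nat) \<Rightarrow> (nat \<Rightarrow> nat) \<Rightarrow> nat list" where
  "rhs_order n k i j \<sigma>1 \<sigma>2 =
     map (\<lambda>r. posx k (\<sigma>1 r)) [0..<i-1] @
     map (\<lambda>r. posy n k (\<sigma>2 r)) [0..<j-1] @ [posx k (\<sigma>1 (i-1))] @
     map (\<lambda>r. posy n k (\<sigma>2 r)) [j-1..<n-1] @
     map (\<lambda>r. posx k (\<sigma>1 r)) [i..<n]"

definition rhs_term :: "('v list \<Rightarrow> 'v) \<Rightarrow> nat \<Rightarrow> 'v list \<Rightarrow> 'v list \<Rightarrow> nat \<Rightarrow> nat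
    \<Rightarrow> (nat \<Rightarrow> nat) \<Rightarrow> (nat \<Rightarrow> nat) \<Rightarrow> 'v" where
  "rhs_term mul n xs ys i j \<sigma>1 \<sigma>2 =
     mul (map (\<lambda>r. xs ! \<sigma>1 r) [0..<i-1] @
           [mul (map (\<lambda>r. ys ! \<sigma>2 r) [0..<j-1] @ [xs ! \<sigma>1 (i-1)] @
                  map (\<lambda>r. ys ! \<sigma>2 r) [j-1..<n-1])] @
           map (\<lambda>r. xs ! \<sigma>1 r) [i..<n])"

definition color_gLt_identity :: "('f::field \<Rightarrow> 'v::ab_group_add \<Rightarrow> 'v) \<Rightarrow> ('g::ab_group_add \<Rightarrow> 'v set)
    \<Rightarrow> nat \<Rightarrow> ('v list \<Rightarrow> 'v) \<Rightarrow> ('g \<Rightarrow> 'g \<Rightarrow> 'f)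
    \<Rightarrow> (nat \<Rightarrow> nat \<Rightarrow> nat \<Rightarrow> (nat \<Rightarrow> nat) \<Rightarrow> (nat \<Rightarrow> nat) \<Rightarrow> 'f) \<Rightarrow> bool" where
  "color_gLt_identity scale Lg n mul eps alpha \<longleftrightarrow>
     (\<forall>k\<in>{1..n}. \<forall>xs ys gx gy.
        length xs = n \<and> length ys = n - 1 \<and> length gx = n \<and> length gy = n - 1 \<and>
        (\<forall>r<n. xs ! r \<in> Lg (gx ! r)) \<and> (\<forall>r<n-1. ys ! r \<in> Lg (gy ! r)) \<longrightarrow>
        mul (take (k-1) ys @ [mul xs] @ drop (k-1) ys) =
        (\<Sum>i\<in>{1..n}. \<Sum>j\<in>{1..n}. \<Sum>\<sigma>1\<in>perms n. \<Sum>\<sigma>2\<in>perms (n-1).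
           scale (alpha i j k \<sigma>1 \<sigma>2 *
                  color_factor eps (take (k-1) gy @ gx @ drop (k-1) gy) (rhs_order n k i j \<sigma>1 \<sigma>2))
                 (rhs_term mul n xs ys i j \<sigma>1 \<sigma>2)))"

definition color_gLt_algebra where
  "color_gLt_algebra scale Lg n mul eps alpha \<longleftrightarrow>
     graded_nary_algebra scale Lg n mul \<and> color_gLt_identity scale Lg n mul eps alpha"

definition color_gLt_ideal :: "('f::field \<Rightarrow> 'v::ab_group_add \<Rightarrow> 'v) \<Rightarrow> ('g \<Rightarrow> 'v set)
    \<Rightarrow> nat \<Rightarrow> ('v list \<Rightarrow> 'v) \<Rightarrow> 'v set \<Rightarrow> bool" where
  "color_gLt_ideal scale Lg n mul S \<longleftrightarrow>
     graded_subspace scale Lg S \<and>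
     (\<forall>\<sigma>\<in>perms n. brk scale mul n \<sigma> (S # replicate (n - 1) UNIV) \<subseteq> S)"

definition qm_basis :: "('f::field \<Rightarrow> 'v::ab_group_add \<Rightarrow> 'v) \<Rightarrow> ('g \<Rightarrow> 'v set)
    \<Rightarrow> nat \<Rightarrow> ('v list \<Rightarrow> 'v) \<Rightarrow> 'v set \<Rightarrow> 'v set \<Rightarrow> 'i set \<Rightarrow> ('i \<Rightarrow> 'v) \<Rightarrow> bool" where
  "qm_basis scale Lg n mul V W I e \<longleftrightarrow>
     graded_subspace scale Lg V \<and> graded_subspace scale Lg W \<and> W \<noteq> {0} \<and>
     V \<inter> W = {0} \<and> setsum V W = UNIV \<and>
     inj_on e I \<and> module.independent scale (e ` I) \<and> module.span scale (e ` I) = W \<and>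
     (\<forall>i\<in>I. \<exists>g. e i \<in> Lg g) \<and>
     (\<forall>is. length is = n \<and> set is \<subseteq> I \<longrightarrow>
        (\<exists>j\<in>I. mul (map e is) \<in> line scale (e j)) \<or> mul (map e is) \<in> V) \<and>
     (\<forall>k is \<sigma>. 0 < k \<and> k < n \<and> length is = k \<and> set is \<subseteq> I \<and> \<sigma> \<in> perms n \<longrightarrow>
        (\<exists>j\<in>I. brk scale mul n \<sigma> (map (\<lambda>i. {e i}) is @ replicate (n - k) V) \<subseteq> line scale (e j))) \<and>
     ((\<exists>j\<in>I. brk scale mul n id (replicate n V) \<subseteq> line scale (e j)) \<or>
      brk scale mul n id (replicate n V) \<subseteq> V)"

definition inherited_qmb :: "('f::field \<Rightarrow> 'v::ab_group_add \<Rightarrow> 'v) \<Rightarrow> ('g \<Rightarrow> 'v set)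
    \<Rightarrow> 'v set \<Rightarrow> 'v set \<Rightarrow> 'i set \<Rightarrow> ('i \<Rightarrow> 'v) \<Rightarrow> 'v set \<Rightarrow> bool" where
  "inherited_qmb scale Lg V W I e S \<longleftrightarrow>
     (\<exists>VS WS I'. graded_subspace scale Lg VS \<and> VS \<subseteq> V \<and>
        graded_subspace scale Lg WS \<and> WS \<subseteq> W \<and> WS \<noteq> {0} \<and>
        I' \<subseteq> I \<and> module.independent scale (e ` I') \<and> module.span scale (e ` I') = WS \<and>
        VS \<inter> WS = {0} \<and> S = setsum VS WS)"

text \<open>The symbols of the paper: Pos j for j, Bar j for the barred symbol; the option type
  realises \<open>\<frak>I = I \<union> {v}\<close> with None = v. Tuples X in \<open>\<frak>I^{n-1} \<union> \<bar>\<frak>I^{n-1}\<close>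
  are pairs (barred?, list of length n-1).\<close>
datatype 'i sym = Pos "'i option" | Bar "'i option"

definition Jset :: "'i set \<Rightarrow> 'i option set" where
  "Jset I = insert None (Some ` I)"

definition uset :: "'v set \<Rightarrow> ('i \<Rightarrow> 'v) \<Rightarrow> 'i option \<Rightarrow> 'v set" where
  "uset V e j = (case j of None \<Rightarrow> V | Some i \<Rightarrow> {e i})"

definition amap where
  "amap scale mul n V I e \<sigma> js =
     (let S = brk scale mul n \<sigma> (map (uset V e) js) in
        {Some r | r. r \<in> I \<and> S \<noteq> {0} \<and> S \<subseteq> line scale (e r)} \<union>
        (if S \<noteq> {0} \<and> S \<subseteq> V then {None} else {}))"

definition bmap where
  "bmap scale mul n V I e \<sigma> j js = {x \<in> Jset I. amap scale mul n V I e \<sigma> (x # js) = {j}}"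

definition mu where
  "mu scale mul n V I e jj X = (case (jj, X) of
      (Pos j, (False, js)) \<Rightarrow> (\<Union>\<sigma>\<in>perms n. amap scale mul n V I e \<sigma> (j # js))
    | (Pos j, (True, js)) \<Rightarrow> (\<Union>\<sigma>\<in>perms n. bmap scale mul n V I e \<sigma> j js)
    | (Bar j, (False, js)) \<Rightarrow> (\<Union>k\<in>{..<n-1}. \<Union>\<sigma>\<in>perms n.
          bmap scale mul n V I e \<sigma> (js ! k) (j # take k js @ drop (Suc k) js))
    | (Bar j, (True, js)) \<Rightarrow> {})"

definition phi where
  "phi scale mul n V I e J X =
     (if J = {} then {} else
       (let K = {i. Some i \<in> (\<Union>jj\<in>J. mu scale mul n V I e jj X)}
        in (Pos \<circ> Some) ` K \<union> (Bar \<circ> Some) ` K))"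

definition connected where
  "connected scale mul n V I e i j \<longleftrightarrow> i \<in> I \<and> j \<in> I \<and>
     (i = j \<or>
      (\<exists>Xs ii. length Xs \<ge> 1 \<and>
         (\<forall>X\<in>set Xs. length (snd X) = n - 1 \<and> set (snd X) \<subseteq> Jset I) \<and>
         ii \<in> {Pos (Some i), Bar (Some i)} \<and>
         (\<forall>s\<in>{1..<length Xs}. foldl (phi scale mul n V I e) {ii} (take s Xs) \<noteq> {}) \<and>
         Pos (Some j) \<in> foldl (phi scale mul n V I e) {ii} Xs))"

definition cls where
  "cls scale mul n V I e i = {j \<in> I. connected scale mul n V I e i j}"

definition Vcls where
  "Vcls scale mul n V I e i =
     module.span scale {mul (map e is) | is. length is = n \<and> set is \<subseteq> cls scale mul n V I e i} \<inter> V"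

definition Wcls where
  "Wcls scale mul n V I e i = module.span scale (e ` cls scale mul n V I e i)"

definition Jcls where
  "Jcls scale mul n V I e i = setsum (Vcls scale mul n V I e i) (Wcls scale mul n V I e i)"

end

theory Submission
  imports Defs
begin

locale setting = vector_space scale
  for scale :: "'f::field \<Rightarrow> 'v::ab_group_add \<Rightarrow> 'v"
  and Lg :: "'g::ab_group_add \<Rightarrow> 'v set"
  and n :: nat
  and mul :: "'v list \<Rightarrow> 'v"
  and eps :: "'g \<Rightarrow> 'g \<Rightarrow> 'f"
  and alpha :: "nat \<Rightarrow> nat \<Rightarrow> nat \<Rightarrow> (nat \<Rightarrow> nat) \<Rightarrow> (nat \<Rightarrow> nat) \<Rightarrow> 'f"
  and V W :: "'v set"
  and I :: "'i set"
  and e :: "'i \<Rightarrow> 'v"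
  and i :: 'i +
  assumes n2: "n \<ge> 2"
    and alg: "color_gLt_algebra scale Lg n mul eps alpha"
    and qm: "qm_basis scale Lg n mul V W I e"
    and iI: "i \<in> I"
begin

lemma qm_facts:
  "subspace V" "subspace W" "V \<inter> W = {0}" "setsum V W = UNIV" 
  "independent (e ` I)" "span (e ` I) = W" "\<forall>i\<in>I. \<exists>g. e i \<in> Lg g"
  using qm unfolding qm_basis_def graded_subspace_def by auto

lemma qm1: "length is = n \<Longrightarrow> set is \<subseteq> I \<Longrightarrow>
        (\<exists>j\<in>I. mul (map e is) \<in> line scale (e j)) \<or> mul (map e is) \<in> V"
  using qm unfolding qm_basis_def by blast

lemma qm2: "0 < k \<Longrightarrow> k < n \<Longrightarrow> length is = k \<Longrightarrow> set is \<subseteq> I \<Longrightarrow> \<sigma> \<in> perms n \<Longrightarrow>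
        (\<exists>j\<in>I. brk scale mul n \<sigma> (map (\<lambda>i. {e i}) is @ replicate (n - k) V) \<subseteq> line scale (e j))"
  using qm unfolding qm_basis_def by blast

lemma line_span: "line scale x = span {x}"
  by (simp add: line_def span_singleton)

lemma e_ne0: "j \<in> I \<Longrightarrow> e j \<noteq> 0"
  using qm_facts(5) dependent_zero by force

lemma line_W: "j \<in> I \<Longrightarrow> line scale (e j) \<subseteq> W"
  using qm_facts(2,6) line_span by (metis empty_subsetI image_eqI insert_subset span_base span_minimal)

lemma VW0: "x \<in> V \<Longrightarrow> x \<in> W \<Longrightarrow> x = 0"
  using qm_facts(3) by blast

lemma mlin: "length xs = n \<Longrightarrow> r < n \<Longrightarrow> module_hom scale scale (\<lambda>x. mul (xs[r := x]))"
  using alg unfolding color_gLt_algebra_def graded_nary_algebra_def multilinear_def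
  by (simp add: module_hom_iff_linear)

lemma graded_mul: "length xs = n \<Longrightarrow> length gs = n \<Longrightarrow> (\<forall>r<n. xs ! r \<in> Lg (gs ! r))
         \<Longrightarrow> mul xs \<in> Lg (sum_list gs)"
  using alg unfolding color_gLt_algebra_def graded_nary_algebra_def by blast

lemma homog_span: "span (\<Union>g. Lg g) = UNIV"
  using alg unfolding color_gLt_algebra_def graded_nary_algebra_def graded_space_def by blast

lemma VI_span: "span (V \<union> e ` I) = UNIV"
proof -
  have "x \<in> span (V \<union> e ` I)" for x
  proof -
    from qm_facts(4) obtain a b where "a \<in> V" "b \<in> W" "x = a + b" unfolding setsum_def by blast
    then show ?thesis using qm_facts(6) span_Un span_eq_iff qm_facts(1) by blast
  qed
  then show ?thesis by auto
qed

lemma slot_subspace: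
  assumes "subspace T" "length zs = n" "r < n"
  shows "subspace {y. mul (zs[r := y]) \<in> T}"
proof -
  interpret h: module_hom scale scale "\<lambda>x. mul (zs[r := x])" using mlin assms by blast
  show ?thesis using assms(1) unfolding subspace_def by (auto simp: h.add h.scale)
qed

lemma gen_reduce:
  assumes T: "subspace T"
    and H: "\<And>zs. length zs = n \<Longrightarrow> (\<forall>q<n. zs ! q \<in> G q) \<Longrightarrow> mul zs \<in> T"
    and zs: "length zs = n" "\<forall>q<n. zs ! q \<in> span (G q)"
  shows "mul zs \<in> T"
proof -
  have "\<forall>zs. length zs = n \<and> (\<forall>q<n. zs ! q \<in> (if q < m then span (G q) else G q)) \<longrightarrow> mul zs \<in> T" for m
  proof (induction m)
    case 0 then show ?case using H by auto
  next
    case (Suc m)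
    show ?case
    proof (intro allI impI)
      fix zs assume A: "length zs = n \<and> (\<forall>q<n. zs ! q \<in> (if q < Suc m then span (G q) else G q))"
      show "mul zs \<in> T"
      proof (cases "m < n")
        case False
        then show ?thesis using Suc.IH A by (metis less_SucI order.strict_trans2 not_less)
      next
        case True
        have "G m \<subseteq> {y. mul (zs[m := y]) \<in> T}"
        proof
          fix y assume y: "y \<in> G m"
          have "\<forall>q<n. zs[m := y] ! q \<in> (if q < m then span (G q) else G q)"
          proof (intro allI impI)
            fix q assume "q < n"
            then show "zs[m := y] ! q \<in> (if q < m then span (G q) else G q)"
              using A y by (cases "q = m") (auto simp: nth_list_update)
          qed
          then have "mul (zs[m := y]) \<in> T"
            using Suc.IH A by auto
          then show "y \<in> {y. mul (zs[m := y]) \<in> T}" by simp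
        qed
        then have "span (G m) \<subseteq> {y. mul (zs[m := y]) \<in> T}"
          using span_minimal slot_subspace[OF T] A True by blast
        moreover have "zs ! m \<in> span (G m)" using A True by auto
        ultimately show ?thesis by auto
      qed
    qed
  qed
  from this[of n] zs show ?thesis by auto
qed


definition del :: "nat \<Rightarrow> 'a list \<Rightarrow> 'a list" where
  "del p xs = take p xs @ drop (Suc p) xs"

lemma del_length[simp]: "p < length xs \<Longrightarrow> length (del p xs) = length xs - 1"
  by (simp add: del_def)

lemma del_nth: "p < length xs \<Longrightarrow> t < length xs - 1 \<Longrightarrow> del p xs ! t = xs ! (if t < p then t else Suc t)"
  by (auto simp: del_def nth_append min_def)

lemma del_mset: "p < length xs \<Longrightarrow> mset xs = add_mset (xs ! p) (mset (del p xs))"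
  unfolding del_def by (subst id_take_nth_drop[of p xs]) auto

lemma del_set: "p < length xs \<Longrightarrow> set (del p xs) \<subseteq> set xs"
  by (auto simp: del_def dest: in_set_takeD in_set_dropD)

lemma brk_id_mem:
  assumes "length zs = n" "\<forall>r<n. zs ! r \<in> As ! r"
  shows "mul zs \<in> brk scale mul n id As"
  unfolding brk_def using assms by (intro span_base) (auto intro!: exI[of _ zs] simp: map_nth)

lemma brk_perm:
  assumes "length As = n" "\<tau> permutes {..<n}"
  shows "brk scale mul n id (permute_list \<tau> As) = brk scale mul n \<tau> As"
proof -
  have tin: "\<And>x. x < n \<Longrightarrow> \<tau> x < n" using permutes_in_image[OF assms(2)] by auto
  have iin: "\<And>x. x < n \<Longrightarrow> inv \<tau> x < n"
    using permutes_in_image[OF permutes_inv[OF assms(2)]] by auto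
  have "{mul (map (\<lambda>r. xs ! id r) [0..<n]) | xs. length xs = n \<and> (\<forall>r<n. xs ! r \<in> permute_list \<tau> As ! r)}
      = {mul (map (\<lambda>r. xs ! \<tau> r) [0..<n]) | xs. length xs = n \<and> (\<forall>r<n. xs ! r \<in> As ! r)}"
  proof (intro set_eqI iffI)
    fix z assume "z \<in> {mul (map (\<lambda>r. xs ! id r) [0..<n]) | xs. length xs = n \<and> (\<forall>r<n. xs ! r \<in> permute_list \<tau> As ! r)}"
    then obtain xs where xs: "z = mul (map (\<lambda>r. xs ! r) [0..<n])" "length xs = n"
      "\<forall>r<n. xs ! r \<in> permute_list \<tau> As ! r" by auto
    define ys where "ys = map (\<lambda>t. xs ! inv \<tau> t) [0..<n]"
    have "length ys = n" by (simp add: ys_def)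
    moreover have "\<forall>r<n. ys ! r \<in> As ! r"
    proof (intro allI impI)
      fix r assume r: "r < n"
      have "xs ! inv \<tau> r \<in> permute_list \<tau> As ! inv \<tau> r" using xs iin r by auto
      also have "permute_list \<tau> As ! inv \<tau> r = As ! \<tau> (inv \<tau> r)"
        using permute_list_nth assms iin r by metis
      also have "\<tau> (inv \<tau> r) = r" using assms(2) permutes_inverses(1) by fastforce
      finally show "ys ! r \<in> As ! r" using r by (simp add: ys_def)
    qed
    moreover have "map (\<lambda>r. ys ! \<tau> r) [0..<n] = map (\<lambda>r. xs ! r) [0..<n]"
      using tin assms(2) permutes_inverses(2) by (fastforce simp: ys_def)
    ultimately show "z \<in> {mul (map (\<lambda>r. xs ! \<tau> r) [0..<n]) | xs. length xs = n \<and> (\<forall>r<n. xs ! r \<in> As ! r)}"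
    proof -
      assume a: "length ys = n" "\<forall>r<n. ys ! r \<in> As ! r" "map (\<lambda>r. ys ! \<tau> r) [0..<n] = map (\<lambda>r. xs ! r) [0..<n]"
      have "z = mul (map (\<lambda>r. ys ! \<tau> r) [0..<n])" by (metis xs(1) a(3))
      then show ?thesis using a(1,2) by blast
    qed
  next
    fix z assume "z \<in> {mul (map (\<lambda>r. xs ! \<tau> r) [0..<n]) | xs. length xs = n \<and> (\<forall>r<n. xs ! r \<in> As ! r)}"
    then obtain ys where ys: "z = mul (map (\<lambda>r. ys ! \<tau> r) [0..<n])" "length ys = n"
      "\<forall>r<n. ys ! r \<in> As ! r" by auto
    define xs where "xs = map (\<lambda>t. ys ! \<tau> t) [0..<n]"
    have "\<forall>r<n. xs ! r \<in> permute_list \<tau> As ! r"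
      using ys tin permute_list_nth[of \<tau> As] assms by (auto simp: xs_def)
    moreover have "map (\<lambda>r. xs ! id r) [0..<n] = map (\<lambda>r. ys ! \<tau> r) [0..<n]" by (simp add: xs_def)
    moreover have "length xs = n" by (simp add: xs_def)
    ultimately show "z \<in> {mul (map (\<lambda>r. xs ! id r) [0..<n]) | xs. length xs = n \<and> (\<forall>r<n. xs ! r \<in> permute_list \<tau> As ! r)}"
    proof -
      assume a: "\<forall>r<n. xs ! r \<in> permute_list \<tau> As ! r" "map (\<lambda>r. xs ! id r) [0..<n] = map (\<lambda>r. ys ! \<tau> r) [0..<n]" "length xs = n"
      have "z = mul (map (\<lambda>r. xs ! id r) [0..<n])" by (metis ys(1) a(2))
      then show ?thesis using a(1,3) by blast
    qed
  qed
  then show ?thesis unfolding brk_def by simp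
qed

abbreviation "PHI \<equiv> phi scale mul n V I e"
abbreviation "MU \<equiv> mu scale mul n V I e"
abbreviation "CONN \<equiv> connected scale mul n V I e"
abbreviation "C \<equiv> cls scale mul n V I e i"
abbreviation "US \<equiv> uset V e"

lemma phi_mem: "jj \<in> J \<Longrightarrow> Some r \<in> MU jj X \<Longrightarrow> Pos (Some r) \<in> PHI J X"
  unfolding phi_def by (auto simp: Let_def)

lemma phi_sym: "Pos (Some j) \<in> PHI J X \<Longrightarrow> Bar (Some j) \<in> PHI J X"
  unfolding phi_def by (auto simp: Let_def split: if_splits)

lemma connected_step:
  assumes c: "CONN i j" and jj: "jj \<in> {Pos (Some j), Bar (Some j)}" and m: "Some r \<in> MU jj X"
    and X: "length (snd X) = n - 1" "set (snd X) \<subseteq> Jset I" and r: "r \<in> I"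
  shows "CONN i r"
proof -
  obtain Xs ii where ch: "\<forall>X\<in>set Xs. length (snd X) = n - 1 \<and> set (snd X) \<subseteq> Jset I"
     "ii \<in> {Pos (Some i), Bar (Some i)}"
     "\<forall>s\<in>{1..<length Xs}. foldl PHI {ii} (take s Xs) \<noteq> {}"
     "jj \<in> foldl PHI {ii} Xs"
  proof (cases "i = j")
    case True
    then show ?thesis using that[of "[]" jj] jj by auto
  next
    case False
    then obtain Xs ii where "length Xs \<ge> 1" "\<forall>X\<in>set Xs. length (snd X) = n - 1 \<and> set (snd X) \<subseteq> Jset I"
      "ii \<in> {Pos (Some i), Bar (Some i)}"
      "\<forall>s\<in>{1..<length Xs}. foldl PHI {ii} (take s Xs) \<noteq> {}"
      "Pos (Some j) \<in> foldl PHI {ii} Xs" using c unfolding connected_def by blast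
    moreover have "Bar (Some j) \<in> foldl PHI {ii} Xs"
    proof -
      from \<open>length Xs \<ge> 1\<close> obtain Ys Y where "Xs = Ys @ [Y]" by (metis One_nat_def le_numeral_extra(2) length_0_conv rev_exhaust)
      then show ?thesis using phi_sym \<open>Pos (Some j) \<in> foldl PHI {ii} Xs\<close> by auto
    qed
    ultimately show ?thesis using that[of Xs ii] jj by auto
  qed
  have ci: "i \<in> I" using c unfolding connected_def by auto
  have "\<forall>s\<in>{1..<length (Xs @ [X])}. foldl PHI {ii} (take s (Xs @ [X])) \<noteq> {}"
  proof
    fix s assume s: "s \<in> {1..<length (Xs @ [X])}"
    show "foldl PHI {ii} (take s (Xs @ [X])) \<noteq> {}"
    proof (cases "s < length Xs")
      case True then show ?thesis using ch(3) s by auto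
    next
      case False then have "s = length Xs" using s by auto
      then show ?thesis using ch(4) by auto
    qed
  qed
  moreover have "Pos (Some r) \<in> foldl PHI {ii} (Xs @ [X])"
    using phi_mem[OF ch(4) m] by simp
  ultimately show ?thesis unfolding connected_def using ci r ch(1,2) X by (intro conjI disjI2 exI[of _ "Xs @ [X]"] exI[of _ ii]) auto
qed

lemma perms_iff: "\<tau> \<in> perms n \<longleftrightarrow> \<tau> permutes {..<n}"
  by (simp add: perms_def atLeast0LessThan)

lemma mu_pos:
  assumes js: "length js = n" "p < n" "js ! p = Some j" "set js \<subseteq> Jset I"
    and S: "brk scale mul n id (map US js) \<noteq> {0}" "brk scale mul n id (map US js) \<subseteq> line scale (e r)"
    and r: "r \<in> I"
  shows "Some r \<in> MU (Pos (Some j)) (False, del p js)"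
proof -
  let ?L = "Some j # del p js"
  have "mset js = mset ?L" using del_mset[of p js] js by simp
  then obtain \<tau> where t: "\<tau> permutes {..<length ?L}" "permute_list \<tau> ?L = js" by (metis mset_eq_permutation)
  have len: "length ?L = n" using js n2 by auto
  then have tp: "\<tau> permutes {..<n}" using t by simp
  have "map US js = permute_list \<tau> (map US ?L)" using t permute_list_map[of \<tau> ?L US] by simp
  then have "brk scale mul n \<tau> (map US ?L) = brk scale mul n id (map US js)"
    using brk_perm[of "map US ?L" \<tau>] len tp by simp
  then have "Some r \<in> amap scale mul n V I e \<tau> ?L" using S r unfolding amap_def by (auto simp: Let_def)
  then show ?thesis unfolding mu_def using tp perms_iff by auto
qed

lemma mu_bar:
  assumes js: "length js = n" "p < n" "q < n" "p \<noteq> q" "js ! p = Some j" "js ! q = Some k" "set js \<subseteq> Jset I"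
    and S: "brk scale mul n id (map US js) \<noteq> {0}" "brk scale mul n id (map US js) \<subseteq> V"
  shows "\<exists>rest. length rest = n - 2 \<and> set rest \<subseteq> Jset I \<and> Some k \<in> MU (Bar (Some j)) (False, None # rest)"
proof -
  define q' where "q' = (if q < p then q else q - 1)"
  define rest where "rest = del q' (del p js)"
  have q'l: "q' < n - 1" using js by (auto simp: q'_def)
  have dq: "del p js ! q' = Some k" using js del_nth[of p js q'] q'l by (auto simp: q'_def)
  have lr: "length rest = n - 2" using js q'l by (simp add: rest_def)
  have sr: "set rest \<subseteq> Jset I" using del_set js q'l unfolding rest_def
    by (metis del_length dual_order.trans)
  let ?L = "Some k # Some j # rest"
  have "mset js = mset ?L" using del_mset[of p js] del_mset[of q' "del p js"] js q'l dq
    by (simp add: rest_def)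
  then obtain \<tau> where t: "\<tau> permutes {..<length ?L}" "permute_list \<tau> ?L = js" by (metis mset_eq_permutation)
  have len: "length ?L = n" using lr n2 by auto
  then have tp: "\<tau> permutes {..<n}" using t by simp
  have "map US js = permute_list \<tau> (map US ?L)" using t permute_list_map[of \<tau> ?L US] by simp
  then have B: "brk scale mul n \<tau> (map US ?L) = brk scale mul n id (map US js)"
    using brk_perm[of "map US ?L" \<tau>] len tp by simp
  have "\<not> (brk scale mul n id (map US js) \<subseteq> line scale (e r))" if "r \<in> I" for r
  proof
    assume a: "brk scale mul n id (map US js) \<subseteq> line scale (e r)"
    obtain s where "s \<in> brk scale mul n id (map US js)" "s \<noteq> 0" using S(1) unfolding brk_def
      using span_zero by blast
    then show False using a S(2) line_W[OF that] VW0 by blast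
  qed
  then have "amap scale mul n V I e \<tau> ?L = {None}" using S B unfolding amap_def by (auto simp: Let_def)
  moreover have "Some k \<in> Jset I" using js nth_mem by (metis in_mono)
  ultimately have "Some k \<in> bmap scale mul n V I e \<tau> None (Some j # rest)" unfolding bmap_def by auto
  then have "Some k \<in> MU (Bar (Some j)) (False, None # rest)" unfolding mu_def using tp perms_iff n2
    by (auto intro!: bexI[of _ 0])
  then show ?thesis using lr sr by blast
qed


lemma some_none_line:
  assumes js: "length js = n" "set js \<subseteq> Jset I" "p < n" "js ! p \<noteq> None" "q < n" "js ! q = None"
  shows "\<exists>r\<in>I. brk scale mul n id (map US js) \<subseteq> line scale (e r)"
proof -
  define a where "a = filter (\<lambda>x. x \<noteq> None) js"
  define b where "b = filter (\<lambda>y. None = y) js"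
  define "is" where "is = map the a"
  define k where "k = length a"
  have aS: "a = map Some is" unfolding is_def map_map by (rule map_idI[symmetric]) (auto simp: a_def)
  have bR: "b = replicate (n - k) None"
  proof -
    have "length b + k = n" using sum_length_filter_compl[of "\<lambda>x. x \<noteq> None" js] js
      by (auto simp: a_def b_def k_def eq_commute[of None])
    then have "length b = n - k" by simp
    then show ?thesis using replicate_length_filter[of None js] by (simp add: b_def)
  qed
  have k0: "0 < k" unfolding k_def a_def using js(3,4) nth_mem[of p js] js(1)
    by (metis (mono_tags, lifting) filter_empty_conv gr0I length_0_conv)
  have kn: "k < n"
  proof -
    have "b \<noteq> []" unfolding b_def using js(5,6) nth_mem[of q js] js(1) by (metis filter_empty_conv)
    moreover have "length b + k = n" using sum_length_filter_compl[of "\<lambda>x. x \<noteq> None" js] js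
      by (auto simp: a_def b_def k_def eq_commute[of None])
    ultimately show ?thesis by auto
  qed
  have lis: "length is = k" by (simp add: is_def k_def)
  have sis: "set is \<subseteq> I"
  proof
    fix x assume "x \<in> set is"
    then have "Some x \<in> set a" using aS by simp
    then have "Some x \<in> set js" by (simp add: a_def)
    then show "x \<in> I" using js(2) by (auto simp: Jset_def)
  qed
  let ?L = "a @ b"
  have "mset js = mset ?L" unfolding a_def b_def using multiset_partition[of "mset js" "\<lambda>x. x \<noteq> None"]
    by (simp add: eq_commute[of None])
  then obtain \<tau> where t: "\<tau> permutes {..<length ?L}" "permute_list \<tau> ?L = js"
    by (metis mset_eq_permutation)
  have len: "length ?L = n" using lis bR aS kn by simp
  then have tp: "\<tau> permutes {..<n}" using t by simp
  have "map US js = permute_list \<tau> (map US ?L)" using t permute_list_map[of \<tau> ?L US] by simp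
  then have B: "brk scale mul n id (map US js) = brk scale mul n \<tau> (map US ?L)"
    using brk_perm[of "map US ?L" \<tau>] len tp by simp
  have "map US ?L = map (\<lambda>i. {e i}) is @ replicate (n - k) V"
    using aS bR by (simp add: uset_def)
  then show ?thesis using B qm2[OF k0 kn lis sis, of \<tau>] tp perms_iff by simp
qed


definition GV where
  "GV = {mul (map e is) | is. length is = n \<and> set is \<subseteq> C \<and> mul (map e is) \<in> V}"

definition TT where "TT = setsum (span GV) (span (e ` C))"

lemma TT_span: "TT = span (GV \<union> e ` C)"
  unfolding TT_def setsum_def span_Un by simp

lemma TT_sub: "subspace TT"
  unfolding TT_span by simp

lemma GV_TT: "GV \<subseteq> TT" unfolding TT_span using span_superset[of "GV \<union> e ` C"] by blast
lemma eC_TT: "e ` C \<subseteq> TT" unfolding TT_span using span_superset[of "GV \<union> e ` C"] by blast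

lemma C_iff: "j \<in> C \<longleftrightarrow> j \<in> I \<and> CONN i j"
  unfolding cls_def by simp

lemma line_TT: "r \<in> C \<Longrightarrow> line scale (e r) \<subseteq> TT"
  unfolding line_span using eC_TT TT_sub by (intro span_minimal) auto

lemma brk_sub:
  assumes "length zs = n" "length js = n" "\<forall>q<n. US (js ! q) = {zs ! q}" "subspace U" "mul zs \<in> U"
  shows "brk scale mul n id (map US js) \<subseteq> U"
  unfolding brk_def
proof (rule span_minimal[OF _ assms(4)])
  have "xs = zs" if "length xs = n" "\<forall>r<n. xs ! r \<in> map US js ! r" for xs
  proof (rule nth_equalityI)
    show "length xs = length zs" using that assms by simp
    fix r assume "r < length xs"
    then have "r < n" using that by simp
    then show "xs ! r = zs ! r" using that(2) assms(2,3) by auto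
  qed
  note eq = this
  show "{mul (map (\<lambda>r. xs ! id r) [0..<n]) | xs. length xs = n \<and> (\<forall>r<n. xs ! r \<in> map US js ! r)} \<subseteq> U"
  proof
    fix z assume "z \<in> {mul (map (\<lambda>r. xs ! id r) [0..<n]) | xs. length xs = n \<and> (\<forall>r<n. xs ! r \<in> map US js ! r)}"
    then obtain xs where x: "z = mul (map (\<lambda>r. xs ! id r) [0..<n])" "length xs = n" "\<forall>r<n. xs ! r \<in> map US js ! r"
      by blast
    have "xs = zs" using eq x(2,3) by blast
    moreover have "map (\<lambda>r. zs ! id r) [0..<n] = zs" using map_nth[of zs] assms(1) by simp
    ultimately show "z \<in> U" using x(1) assms(5) by simp
  qed
qed

lemma caseA_gen:
  assumes js: "length js = n" "set js \<subseteq> Jset I" "p < n" "js ! p = Some j" "j \<in> C"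
    and zs: "length zs = n" "\<forall>q<n. zs ! q \<in> US (js ! q)"
  shows "mul zs \<in> TT"
proof (cases "mul zs = 0")
  case True then show ?thesis using TT_sub subspace_0 by simp
next
  case False
  let ?S = "brk scale mul n id (map US js)"
  have mS: "mul zs \<in> ?S" using brk_id_mem zs js by simp
  then have S0: "?S \<noteq> {0}" using False by auto
  have cj: "CONN i j" using js C_iff by auto
  have Xok: "length (del p js) = n - 1" "set (del p js) \<subseteq> Jset I" using js del_set by auto
  have line_case: "mul zs \<in> TT" if r: "r \<in> I" "?S \<subseteq> line scale (e r)" for r
  proof -
    have "Some r \<in> MU (Pos (Some j)) (False, del p js)" using mu_pos[OF js(1,3,4,2) S0 r(2) r(1)] .
    then have "CONN i r" using connected_step[OF cj _ _ _ _ r(1), of "Pos (Some j)" "(False, del p js)"] Xok by auto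
    then have "r \<in> C" using r C_iff by auto
    then show ?thesis using line_TT mS r by blast
  qed
  show ?thesis
  proof (cases "\<exists>q<n. js ! q = None")
    case True
    then obtain q where "q < n" "js ! q = None" by blast
    then obtain r where "r \<in> I" "?S \<subseteq> line scale (e r)" using some_none_line[OF js(1,2,3) _ ] js(4) by auto
    then show ?thesis using line_case by blast
  next
    case False
    define "is" where "is = map the js"
    have jsS: "js = map Some is" unfolding is_def map_map
      using False js(1) by (intro map_idI[symmetric]) (auto simp: in_set_conv_nth)
    have lis: "length is = n" using js by (simp add: is_def)
    have sis: "set is \<subseteq> I" using js(2) jsS by (auto simp: Jset_def)
    have zse: "zs = map e is" using zs lis jsS by (intro nth_equalityI) (auto simp: uset_def)
    have US: "\<forall>q<n. US (js ! q) = {zs ! q}"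
    proof (intro allI impI)
      fix q assume "q < n"
      then show "US (js ! q) = {zs ! q}" using jsS zse lis by (simp add: uset_def)
    qed
    from qm1[OF lis sis] show ?thesis
    proof
      assume "\<exists>r\<in>I. mul (map e is) \<in> line scale (e r)"
      then obtain r where r: "r \<in> I" "mul zs \<in> line scale (e r)" using zse by auto
      have "?S \<subseteq> line scale (e r)" using brk_sub[OF zs(1) js(1) US _ r(2)] line_span by simp
      then show ?thesis using line_case r by blast
    next
      assume V: "mul (map e is) \<in> V"
      have SV: "?S \<subseteq> V" using brk_sub[OF zs(1) js(1) US qm_facts(1)] V zse by simp
      have "is ! q \<in> C" if q: "q < n" for q
      proof (cases "q = p")
        case True then show ?thesis using js jsS lis by simp
      next
        case False
        have "js ! q = Some (is ! q)" using jsS q lis by simp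
        from mu_bar[OF js(1,3) q False[symmetric] js(4) this js(2) S0 SV]
        obtain rest where "length rest = n - 2" "set rest \<subseteq> Jset I"
          "Some (is ! q) \<in> MU (Bar (Some j)) (False, None # rest)" by blast
        moreover have "is ! q \<in> I" using sis q lis by auto
        ultimately have "CONN i (is ! q)"
          using connected_step[OF cj, of "Bar (Some j)" "is ! q" "(False, None # rest)"] n2
          by (auto simp: Jset_def)
        then show ?thesis using C_iff \<open>is ! q \<in> I\<close> by auto
      qed
      then have "set is \<subseteq> C" using lis by (auto simp: in_set_conv_nth)
      then have "mul zs \<in> GV" using V zse lis unfolding GV_def by blast
      then show ?thesis using GV_TT by auto
    qed
  qed
qed



lemma C_I: "C \<subseteq> I" using C_iff by auto

lemma caseA_full:
  assumes zs: "length zs = n" "p < n" "zs ! p = e j" "j \<in> C"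
  shows "mul zs \<in> TT"
proof (rule gen_reduce[OF TT_sub, of "\<lambda>q. if q = p then {e j} else V \<union> e ` I"])
  fix ws assume ws: "length ws = n" "\<forall>q<n. ws ! q \<in> (if q = p then {e j} else V \<union> e ` I)"
  define f where "f q = (if q = p then Some j else if ws ! q \<in> V then None
                         else Some (SOME k. k \<in> I \<and> ws ! q = e k))" for q
  define js where "js = map f [0..<n]"
  have jI: "j \<in> I" using zs C_I by auto
  have fq: "f q \<in> Jset I \<and> ws ! q \<in> US (f q)" if q: "q < n" for q
  proof (cases "q = p")
    case True
    have "ws ! q \<in> (if q = p then {e j} else V \<union> e ` I)" using ws(2) q by blast
    then show ?thesis using True jI by (simp add: f_def Jset_def uset_def)
  next
    case False
    show ?thesis
    proof (cases "ws ! q \<in> V")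
      case True then show ?thesis using False by (simp add: f_def Jset_def uset_def)
    next
      case nV: False
      have "ws ! q \<in> (if q = p then {e j} else V \<union> e ` I)" using ws(2) q by blast
      then have "ws ! q \<in> V \<union> e ` I" using False by simp
      then have "\<exists>k. k \<in> I \<and> ws ! q = e k" using nV by auto
      then have "(SOME k. k \<in> I \<and> ws ! q = e k) \<in> I \<and> ws ! q = e (SOME k. k \<in> I \<and> ws ! q = e k)"
        by (rule someI_ex)
      then show ?thesis using False nV by (simp add: f_def Jset_def uset_def)
    qed
  qed
  have "length js = n" by (simp add: js_def)
  moreover have "set js \<subseteq> Jset I" using fq by (auto simp: js_def)
  moreover have "js ! p = Some j" using zs(2) by (simp add: js_def f_def)
  moreover have "\<forall>q<n. ws ! q \<in> US (js ! q)" using fq by (simp add: js_def)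
  ultimately
  show "mul ws \<in> TT" using caseA_gen[of js p j ws] zs ws by auto
next
  show "length zs = n" by fact
  show "\<forall>q<n. zs ! q \<in> span (if q = p then {e j} else V \<union> e ` I)"
    using zs VI_span span_superset by auto
qed

lemma rhs_in:
  assumes i: "ii \<in> {1..n}" and s: "\<sigma>1 \<in> perms n" and xs: "length xs = n" "\<forall>r<n. xs ! r = e (is ! r)"
    and "is": "length is = n" "set is \<subseteq> C"
  shows "rhs_term mul n xs ys ii jj \<sigma>1 \<sigma>2 \<in> TT"
proof -
  have sp: "\<sigma>1 permutes {..<n}" using s perms_iff by auto
  have sr: "\<sigma>1 r < n" if "r < n" for r using permutes_in_image[OF sp] that by auto
  have cl: "xs ! \<sigma>1 r = e (is ! \<sigma>1 r) \<and> is ! \<sigma>1 r \<in> C" if "r < n" for r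
    using sr[OF that] xs "is" nth_mem[of "\<sigma>1 r" "is"] by auto
  let ?A = "map (\<lambda>r. xs ! \<sigma>1 r) [0..<ii-1]"
  let ?B = "map (\<lambda>r. xs ! \<sigma>1 r) [ii..<n]"
  let ?inner = "mul (map (\<lambda>r. ys ! \<sigma>2 r) [0..<jj-1] @ [xs ! \<sigma>1 (ii-1)] @ map (\<lambda>r. ys ! \<sigma>2 r) [jj-1..<n-1])"
  have rt: "rhs_term mul n xs ys ii jj \<sigma>1 \<sigma>2 = mul (?A @ [?inner] @ ?B)"
    unfolding rhs_term_def by simp
  have len: "length (?A @ [?inner] @ ?B) = n" using i by auto
  show ?thesis
  proof (cases "ii \<ge> 2")
    case True
    have "(?A @ [?inner] @ ?B) ! 0 = xs ! \<sigma>1 0" using True by (simp add: nth_append)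
    then show ?thesis unfolding rt using caseA_full[OF len, of 0] cl[of 0] n2 by auto
  next
    case False
    then have ii1: "ii = 1" using i by auto
    have "(?A @ [?inner] @ ?B) ! 1 = xs ! \<sigma>1 1" using ii1 n2 by (simp add: nth_append)
    then show ?thesis unfolding rt using caseA_full[OF len, of 1] cl[of 1] n2 by auto
  qed
qed

definition deg where "deg x = (SOME g. x \<in> Lg g)"

lemma deg: "x \<in> (\<Union>g. Lg g) \<Longrightarrow> x \<in> Lg (deg x)"
  unfolding deg_def by (auto intro: someI)

lemma caseB_gen:
  assumes zs: "length zs = n" "p < n" "zs ! p \<in> GV" "\<forall>q<n. q \<noteq> p \<longrightarrow> zs ! q \<in> (\<Union>g. Lg g)"
  shows "mul zs \<in> TT"
proof -
  obtain "is" where "is": "zs ! p = mul (map e is)" "length is = n" "set is \<subseteq> C"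
    using zs(3) unfolding GV_def by blast
  define xs where "xs = map e is"
  define gx where "gx = map (\<lambda>j. deg (e j)) is"
  define ys where "ys = del p zs"
  define gy where "gy = map deg ys"
  have hx: "\<forall>r<n. xs ! r \<in> Lg (gx ! r)"
  proof (intro allI impI)
    fix r assume r: "r < n"
    then have "is ! r \<in> set is" using "is"(2) by simp
    then have "is ! r \<in> I" using "is"(3) C_I by blast
    then have "e (is ! r) \<in> (\<Union>g. Lg g)" using qm_facts(7) by auto
    then show "xs ! r \<in> Lg (gx ! r)" using r "is" deg by (simp add: xs_def gx_def)
  qed
  have ly: "length ys = n - 1" using zs by (simp add: ys_def)
  have hy: "\<forall>r<n-1. ys ! r \<in> Lg (gy ! r)"
  proof (intro allI impI)
    fix r assume r: "r < n - 1"
    have "ys ! r = zs ! (if r < p then r else Suc r)" using del_nth[of p zs r] zs r by (simp add: ys_def)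
    moreover have "(if r < p then r else Suc r) \<noteq> p" "(if r < p then r else Suc r) < n" using r by auto
    ultimately have "ys ! r \<in> (\<Union>g. Lg g)" using zs(4) by metis
    then show "ys ! r \<in> Lg (gy ! r)" using deg r ly by (simp add: gy_def)
  qed
  have zeq: "take (Suc p - 1) ys @ [mul xs] @ drop (Suc p - 1) ys = zs"
  proof -
    have "take p ys = take p zs" "drop p ys = drop (Suc p) zs" using zs by (auto simp: ys_def del_def)
    then show ?thesis using id_take_nth_drop[of p zs] zs "is" by (simp add: xs_def)
  qed
  have kk: "Suc p \<in> {1..n}" using zs by auto
  have ident: "color_gLt_identity scale Lg n mul eps alpha" using alg by (simp add: color_gLt_algebra_def)
  have "mul zs = (\<Sum>ii\<in>{1..n}. \<Sum>jj\<in>{1..n}. \<Sum>\<sigma>1\<in>perms n. \<Sum>\<sigma>2\<in>perms (n-1).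
           scale (alpha ii jj (Suc p) \<sigma>1 \<sigma>2 *
                  color_factor eps (take (Suc p - 1) gy @ gx @ drop (Suc p - 1) gy) (rhs_order n (Suc p) ii jj \<sigma>1 \<sigma>2))
                 (rhs_term mul n xs ys ii jj \<sigma>1 \<sigma>2))"
    using ident[unfolded color_gLt_identity_def, rule_format, OF kk, of xs ys gx gy] zeq hx hy ly "is"
    by (simp add: xs_def gx_def gy_def)
  also have "\<dots> \<in> TT"
    using rhs_in[OF _ _ _ _ "is"(2,3)] "is"(2) TT_sub
    by (intro subspace_sum subspace_scale) (auto simp: xs_def)
  finally show ?thesis .
qed

lemma caseJ:
  assumes zs: "length zs = n" "p < n" "zs ! p \<in> TT"
  shows "mul zs \<in> TT"
proof (rule gen_reduce[OF TT_sub, of "\<lambda>q. if q = p then GV \<union> e ` C else (\<Union>g. Lg g)"])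
  fix ws assume ws: "length ws = n" "\<forall>q<n. ws ! q \<in> (if q = p then GV \<union> e ` C else (\<Union>g. Lg g))"
  then have "ws ! p \<in> GV \<union> e ` C" using zs by auto
  then show "mul ws \<in> TT"
  proof
    assume "ws ! p \<in> GV"
    moreover have "\<forall>q<n. q \<noteq> p \<longrightarrow> ws ! q \<in> (\<Union>g. Lg g)" using ws(2) by auto
    ultimately show ?thesis using caseB_gen[OF ws(1) zs(2)] by blast
  next
    assume "ws ! p \<in> e ` C"
    then obtain j where "j \<in> C" "ws ! p = e j" by auto
    then show ?thesis using caseA_full[OF ws(1) zs(2)] by blast
  qed
next
  show "length zs = n" by fact
  show "\<forall>q<n. zs ! q \<in> span (if q = p then GV \<union> e ` C else (\<Union>g. Lg g))"
    using zs homog_span TT_span by auto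
qed


lemma GV_homog: "GV \<subseteq> (\<Union>g. Lg g)"
proof
  fix x assume "x \<in> GV"
  then obtain "is" where x: "x = mul (map e is)" "length is = n" "set is \<subseteq> C" unfolding GV_def by blast
  define gs where "gs = map (\<lambda>j. deg (e j)) is"
  have "\<forall>r<n. map e is ! r \<in> Lg (gs ! r)"
  proof (intro allI impI)
    fix r assume r: "r < n"
    then have "is ! r \<in> set is" using x(2) by simp
    then have "is ! r \<in> I" using x(3) C_I by blast
    then have "e (is ! r) \<in> (\<Union>g. Lg g)" using qm_facts(7) by auto
    then show "map e is ! r \<in> Lg (gs ! r)" using r x(2) deg by (simp add: gs_def)
  qed
  then have "x \<in> Lg (sum_list gs)" using graded_mul[of "map e is" gs] x by (simp add: gs_def)
  then show "x \<in> (\<Union>g. Lg g)" by blast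
qed

lemma eC_homog: "e ` C \<subseteq> (\<Union>g. Lg g)" using qm_facts(7) C_I by blast

lemma graded_span:
  assumes "A \<subseteq> (\<Union>g. Lg g)" shows "graded_subspace scale Lg (span A)"
  unfolding graded_subspace_def
proof
  show "subspace (span A)" by simp
  have "A \<subseteq> (\<Union>g. span A \<inter> Lg g)" using assms span_superset[of A] by blast
  then show "span A \<subseteq> span (\<Union>g. span A \<inter> Lg g)" by (rule span_mono)
qed

lemma Vcls_eq: "Vcls scale mul n V I e i = span GV"
proof
  let ?P = "{mul (map e is) | is. length is = n \<and> set is \<subseteq> C}"
  have GVP: "GV \<subseteq> ?P" unfolding GV_def by blast
  have GVV: "span GV \<subseteq> V" using span_minimal[of GV V] qm_facts(1) unfolding GV_def by blast
  show "span GV \<subseteq> Vcls scale mul n V I e i"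
    unfolding Vcls_def using GVV span_mono[OF GVP] by blast
  have PT: "?P \<subseteq> TT"
  proof
    fix x assume "x \<in> ?P"
    then obtain "is" where x: "x = mul (map e is)" "length is = n" "set is \<subseteq> C" by blast
    have "is ! 0 \<in> set is" using x(2) n2 by simp
    then have "is ! 0 \<in> C" using x(3) by blast
    then show "x \<in> TT" using caseA_full[of "map e is" 0 "is ! 0"] x n2 by auto
  qed
  show "Vcls scale mul n V I e i \<subseteq> span GV"
  proof
    fix x assume "x \<in> Vcls scale mul n V I e i"
    then have x: "x \<in> span ?P" "x \<in> V" unfolding Vcls_def by auto
    then have "x \<in> TT" using span_minimal[OF PT TT_sub] by blast
    then obtain a b where ab: "a \<in> span GV" "b \<in> span (e ` C)" "x = a + b"
      unfolding TT_def setsum_def by blast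
    have "b = x - a" using ab by simp
    then have "b \<in> V" using x(2) GVV ab(1) qm_facts(1) subspace_diff by auto
    moreover have "b \<in> W" using ab(2) span_mono[of "e ` C" "e ` I"] C_I qm_facts(6) by blast
    ultimately have "b = 0" using VW0 by blast
    then show "x \<in> span GV" using ab by simp
  qed
qed

lemma Jcls_eq: "Jcls scale mul n V I e i = TT"
  unfolding Jcls_def Vcls_eq Wcls_def TT_def ..

lemma main:
  "color_gLt_ideal scale Lg n mul (Jcls scale mul n V I e i) \<and>
   inherited_qmb scale Lg V W I e (Jcls scale mul n V I e i)"
proof
  have gT: "graded_subspace scale Lg TT"
    unfolding TT_span by (rule graded_span) (use GV_homog eC_homog in blast)
  have "brk scale mul n \<sigma> (TT # replicate (n - 1) UNIV) \<subseteq> TT" if s: "\<sigma> \<in> perms n" for \<sigma>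
    unfolding brk_def
  proof (rule span_minimal[OF _ TT_sub], rule subsetI)
    fix z assume "z \<in> {mul (map (\<lambda>r. xs ! \<sigma> r) [0..<n]) | xs. length xs = n \<and> (\<forall>r<n. xs ! r \<in> (TT # replicate (n - 1) UNIV) ! r)}"
    then obtain xs where x: "z = mul (map (\<lambda>r. xs ! \<sigma> r) [0..<n])" "length xs = n"
      "\<forall>r<n. xs ! r \<in> (TT # replicate (n - 1) UNIV) ! r" by blast
    have sp: "\<sigma> permutes {..<n}" using s perms_iff by auto
    have i0: "inv \<sigma> 0 < n" using permutes_in_image[OF permutes_inv[OF sp]] n2 by auto
    have "\<sigma> (inv \<sigma> 0) = 0" using sp permutes_inverses(1) by fastforce
    then have "map (\<lambda>r. xs ! \<sigma> r) [0..<n] ! inv \<sigma> 0 = xs ! 0" using i0 by simp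
    moreover have "xs ! 0 \<in> TT" using x(3) n2 by (metis gr_zeroI nth_Cons_0 not_numeral_le_zero)
    ultimately show "z \<in> TT" using caseJ[of "map (\<lambda>r. xs ! \<sigma> r) [0..<n]" "inv \<sigma> 0"] i0 x(1) by auto
  qed
  then show "color_gLt_ideal scale Lg n mul (Jcls scale mul n V I e i)"
    unfolding color_gLt_ideal_def Jcls_eq using gT by blast
  have "CONN i i" using iI unfolding connected_def by simp
  then have iC: "i \<in> C" using iI C_iff by blast
  have WC0: "span (e ` C) \<noteq> {0}" using iC e_ne0 iI span_superset[of "e ` C"] by blast
  have WCW: "span (e ` C) \<subseteq> W" using span_mono[of "e ` C" "e ` I"] C_I qm_facts(6) by blast
  have GVV: "span GV \<subseteq> V" using span_minimal[of GV V] qm_facts(1) unfolding GV_def by blast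
  have int0: "span GV \<inter> span (e ` C) = {0}" using GVV WCW VW0 span_zero by blast
  have indC: "independent (e ` C)" using independent_mono[OF qm_facts(5)] C_I by blast
  show "inherited_qmb scale Lg V W I e (Jcls scale mul n V I e i)"
    unfolding inherited_qmb_def Jcls_eq
    apply (rule exI[of _ "span GV"], rule exI[of _ "span (e ` C)"], rule exI[of _ C])
    using graded_span[OF GV_homog] graded_span[OF eC_homog] GVV WCW WC0 C_I indC int0
    by (simp add: TT_def)
qed

end

theorem proposition3p8:
  fixes scale :: "'f::field \<Rightarrow> 'v::ab_group_add \<Rightarrow> 'v"
    and Lg :: "'g::ab_group_add \<Rightarrow> 'v set"
    and n :: nat
    and mul :: "'v list \<Rightarrow> 'v"
    and eps :: "'g \<Rightarrow> 'g \<Rightarrow> 'f"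
    and alpha :: "nat \<Rightarrow> nat \<Rightarrow> nat \<Rightarrow> (nat \<Rightarrow> nat) \<Rightarrow> (nat \<Rightarrow> nat) \<Rightarrow> 'f"
    and V W :: "'v set"
    and I :: "'i set"
    and e :: "'i \<Rightarrow> 'v"
    and i :: 'i
  assumes "vector_space scale"
    and "n \<ge> 2"
    and "bicharacter eps"
    and "color_gLt_algebra scale Lg n mul eps alpha"
    and "qm_basis scale Lg n mul V W I e"
    and "i \<in> I"
  shows "color_gLt_ideal scale Lg n mul (Jcls scale mul n V I e i) \<and>
         inherited_qmb scale Lg V W I e (Jcls scale mul n V I e i)"
proof -
  interpret setting scale Lg n mul eps alpha V W I e i
    using assms by (simp add: setting_def setting_axioms_def)
  show ?thesis by (rule main)
qed

end
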